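(* Let $a$ be the unique positive root of $\frac{1-\ln a}{a}=\frac1e$ and $\psi_a(x)=1-(1-x)a^x$. Then for all $0<y\le1$, \[ \frac1y\,\psi_a\Big(\frac{y\,e^{1-y}}{2\,(1-y)^{1-y}}\Big)\le1. \]
   Context: Convention: $0^0=1$. *)

theory Defs
  imports Complex_Main
begin

text \<open>Real power with the convention 0^0 = 1 (Isabelle's powr has 0 powr 0 = 0).\<close>
definition rpow0 :: "real \<Rightarrow> real \<Rightarrow> real" where
  "rpow0 x t = (if x = 0 then (if t = 0 then 1 else 0) else x powr t)"

definition psi :: "real \<Rightarrow> real \<Rightarrow> real" where
  "psi a x = 1 - (1 - x) * a powr x"

end

theory Submission
  imports Defs
begin

lemma exp1_ub: "exp 1 \<le> (2719/1000::real)"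
proof -
  obtain t where t: "exp (-1::real) = (\<Sum>m<8. (-1) ^ m / fact m) + exp t / fact 8 * (-1) ^ 8"
    using Maclaurin_exp_le[of "-1::real" 8] by auto
  have "(\<Sum>m<8. (-1::real) ^ m / fact m) = 103/280"
    by (simp add: eval_nat_numeral fact_Suc)
  moreover have "exp t / fact 8 * (-1::real) ^ 8 \<ge> 0" by simp
  ultimately have "exp (-1::real) \<ge> 103/280" using t by linarith
  then have "exp 1 * (103/280) \<le> exp 1 * exp (-1::real)"
    by (intro mult_left_mono) auto
  also have "exp 1 * exp (-1::real) = 1" by (simp flip: exp_add)
  finally show ?thesis by simp
qed

lemma exp057: "exp (57/100::real) \<ge> 176/100"
proof -
  obtain t where t: "exp (57/100::real) = (\<Sum>m<4. (57/100) ^ m / fact m) + exp t / fact 4 * (57/100) ^ 4"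
    using Maclaurin_exp_le[of "57/100::real" 4] by auto
  have "(\<Sum>m<4. (57/100::real) ^ m / fact m) \<ge> 176/100"
    by (simp add: eval_nat_numeral fact_Suc)
  moreover have "exp t / fact 4 * (57/100::real) ^ 4 \<ge> 0" by simp
  ultimately show ?thesis using t by linarith
qed

lemma expneg: assumes "0 \<le> (z::real)" shows "exp (-z) \<le> 1 - z + z^2/2"
proof -
  obtain t where t: "exp (-z) = (\<Sum>m<3. (-z) ^ m / fact m) + exp t / fact 3 * (-z) ^ 3"
    using Maclaurin_exp_le[of "-z" 3] by auto
  have "(\<Sum>m<3. (-z) ^ m / fact m) = 1 - z + z^2/2"
    by (simp add: eval_nat_numeral fact_Suc)
  moreover have "exp t / fact 3 * (-z) ^ 3 \<le> 0" using assms by (simp add: mult_nonneg_nonpos)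
  ultimately show ?thesis using t by linarith
qed

lemma ln_b1: assumes "0 \<le> (y::real)" "y < 1" shows "- ln (1 - y) - y - y^2/2 \<ge> 0"
proof -
  have "(\<lambda>y. - ln (1 - y) - y - y^2/2) 0 \<le> (\<lambda>y. - ln (1 - y) - y - y^2/2) y"
  proof (rule DERIV_nonneg_imp_nondecreasing[OF assms(1)])
    fix x :: real assume x: "0 \<le> x" "x \<le> y"
    have "DERIV (\<lambda>y. - ln (1 - y) - y - y^2/2) x :> (- (-1 / (1 - x)) - 1 - x)"
      using x assms by (auto intro!: derivative_eq_intros)
    moreover have "- (-1 / (1 - x)) - 1 - x \<ge> 0"
    proof -
      have "- (-1 / (1 - x)) - 1 - x = x^2 / (1 - x)" using x assms by (simp add: field_simps power2_eq_square)
      thus ?thesis using x assms by simp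
    qed
    ultimately show "\<exists>d. DERIV (\<lambda>y. - ln (1 - y) - y - y^2/2) x :> d \<and> d \<ge> 0" by blast
  qed
  thus ?thesis by simp
qed

lemma ln_b2: assumes "0 \<le> (y::real)" "y < 1" shows "(1 - y) * ln (1 - y) + y - y^2/2 - y^3/6 \<ge> 0"
proof -
  have "(\<lambda>y. (1 - y) * ln (1 - y) + y - y^2/2 - y^3/6) 0 \<le> (\<lambda>y. (1 - y) * ln (1 - y) + y - y^2/2 - y^3/6) y"
  proof (rule DERIV_nonneg_imp_nondecreasing[OF assms(1)])
    fix x :: real assume x: "0 \<le> x" "x \<le> y"
    have "DERIV (\<lambda>y. (1 - y) * ln (1 - y) + y - y^2/2 - y^3/6) x :> (- ln (1 - x) + (1 - x) * (-1 / (1 - x)) + 1 - x - x^2/2)"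
      using x assms by (auto intro!: derivative_eq_intros simp: power2_eq_square)
    moreover have "- ln (1 - x) + (1 - x) * (-1 / (1 - x)) + 1 - x - x^2/2 \<ge> 0"
      using ln_b1[of x] x assms by simp
    ultimately show "\<exists>d. DERIV (\<lambda>y. (1 - y) * ln (1 - y) + y - y^2/2 - y^3/6) x :> d \<and> d \<ge> 0" by blast
  qed
  thus ?thesis by simp
qed

definition zz :: "real \<Rightarrow> real" where "zz y = y^2/2 + y^3/6"
definition WW :: "real \<Rightarrow> real" where "WW y = (2719/2000) * (1 - zz y + (zz y)^2/2)"

lemma zz_mono: "0 \<le> y0 \<Longrightarrow> y0 \<le> y \<Longrightarrow> zz y0 \<le> zz y"
  unfolding zz_def by (intro add_mono divide_right_mono power_mono) auto

lemma zz_le: "0 \<le> y \<Longrightarrow> y \<le> 1 \<Longrightarrow> zz y \<le> 2/3"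
  using zz_mono[of y 1] by (simp add: zz_def)

lemma zz_nonneg: "0 \<le> y \<Longrightarrow> 0 \<le> zz y"
  unfolding zz_def by simp

lemma WW_mono: assumes "0 \<le> y0" "y0 \<le> y" "y \<le> 1" shows "WW y \<le> WW y0"
proof -
  have a: "zz y0 \<le> zz y" using zz_mono assms by auto
  have b: "zz y \<le> 2/3" using zz_le assms by auto
  have c: "0 \<le> zz y0" using zz_nonneg assms by auto
  have "(1 - zz y0 + (zz y0)^2/2) - (1 - zz y + (zz y)^2/2) = (zz y - zz y0) * (1 - (zz y + zz y0)/2)"
    by (simp add: field_simps power2_eq_square)
  also have "\<dots> \<ge> 0" using a b c by (intro mult_nonneg_nonneg) auto
  finally show ?thesis unfolding WW_def by simp
qed

lemma WW_nonneg: "0 \<le> WW y"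
proof -
  have "1 - zz y + (zz y)^2/2 = ((zz y - 1)^2 + 1)/2" by (simp add: algebra_simps power2_eq_square)
  also have "\<dots> \<ge> 0" by simp
  finally show ?thesis unfolding WW_def by simp
qed

lemma G_piece:
  assumes "0 \<le> y0" "y0 \<le> y" "y \<le> y1" "y1 \<le> 1"
    and "57/100 * WW y0 + 43/100 * y1 * (WW y0)^2 \<le> 1"
  shows "57/100 * WW y + 43/100 * y * (WW y)^2 \<le> 1"
proof -
  have w: "WW y \<le> WW y0" "0 \<le> WW y" using WW_mono WW_nonneg assms by auto
  have "(WW y)^2 \<le> (WW y0)^2" using w by (intro power_mono) auto
  hence "y * (WW y)^2 \<le> y1 * (WW y0)^2" using assms by (intro mult_mono) auto
  thus ?thesis using w assms by linarith
qed

lemma G_bound: assumes "0 \<le> y" "y \<le> 1"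
  shows "57/100 * WW y + 43/100 * y * (WW y)^2 \<le> 1"
proof -
  consider "y \<le> 28/100" | "28/100 \<le> y \<and> y \<le> 35/100" | "35/100 \<le> y \<and> y \<le> 39/100"
    | "39/100 \<le> y \<and> y \<le> 43/100" | "43/100 \<le> y \<and> y \<le> 47/100" | "47/100 \<le> y \<and> y \<le> 51/100"
    | "51/100 \<le> y \<and> y \<le> 56/100" | "56/100 \<le> y \<and> y \<le> 64/100" | "64/100 \<le> y \<and> y \<le> 80/100"
    | "80/100 \<le> y" by linarith
  then show ?thesis
  proof cases
    case 1 show ?thesis by (rule G_piece[of 0 _ "28/100"]) (use assms 1 in \<open>auto simp: WW_def zz_def power2_eq_square power3_eq_cube\<close>)
  next case 2 show ?thesis by (rule G_piece[of "28/100" _ "35/100"]) (use assms 2 in \<open>auto simp: WW_def zz_def power2_eq_square power3_eq_cube\<close>)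
  next case 3 show ?thesis by (rule G_piece[of "35/100" _ "39/100"]) (use assms 3 in \<open>auto simp: WW_def zz_def power2_eq_square power3_eq_cube\<close>)
  next case 4 show ?thesis by (rule G_piece[of "39/100" _ "43/100"]) (use assms 4 in \<open>auto simp: WW_def zz_def power2_eq_square power3_eq_cube\<close>)
  next case 5 show ?thesis by (rule G_piece[of "43/100" _ "47/100"]) (use assms 5 in \<open>auto simp: WW_def zz_def power2_eq_square power3_eq_cube\<close>)
  next case 6 show ?thesis by (rule G_piece[of "47/100" _ "51/100"]) (use assms 6 in \<open>auto simp: WW_def zz_def power2_eq_square power3_eq_cube\<close>)
  next case 7 show ?thesis by (rule G_piece[of "51/100" _ "56/100"]) (use assms 7 in \<open>auto simp: WW_def zz_def power2_eq_square power3_eq_cube\<close>)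
  next case 8 show ?thesis by (rule G_piece[of "56/100" _ "64/100"]) (use assms 8 in \<open>auto simp: WW_def zz_def power2_eq_square power3_eq_cube\<close>)
  next case 9 show ?thesis by (rule G_piece[of "64/100" _ "80/100"]) (use assms 9 in \<open>auto simp: WW_def zz_def power2_eq_square power3_eq_cube\<close>)
  next case 10 show ?thesis by (rule G_piece[of "80/100" _ "1"]) (use assms 10 in \<open>auto simp: WW_def zz_def power2_eq_square power3_eq_cube\<close>)
  qed
qed

lemma c_bound:
  fixes a :: real
  assumes ha: "a > 0" and hroot: "(1 - ln a) / a = 1 / exp 1"
  shows "43/100 \<le> ln a \<and> ln a < 1"
proof -
  define c where "c = ln a"
  have "(1 - c) / exp c = 1 / exp 1" using hroot ha unfolding c_def by simp
  hence "(1 - c) * exp 1 = exp c" by (simp add: field_simps)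
  hence e: "1 - c = exp (c - 1)" by (simp add: exp_diff field_simps)
  have c1: "c < 1" using e by (smt (verit) exp_gt_zero)
  have "c \<ge> 43/100"
  proof (rule ccontr)
    assume "\<not> c \<ge> 43/100"
    hence "exp (c - 1) < exp (-57/100)" by simp
    also have "exp (-57/100::real) = 1 / exp (57/100)" by (simp add: exp_minus field_simps)
    also have "\<dots> \<le> 1 / (176/100)" using exp057 by (intro divide_left_mono) auto
    finally have "1 - c < 100/176" using e by simp
    thus False using \<open>\<not> c \<ge> 43/100\<close> by simp
  qed
  thus ?thesis using c1 c_def by simp
qed

theorem lemma5p8:
  fixes a y :: real
  assumes ha: "a > 0" and hroot: "(1 - ln a) / a = 1 / exp 1"
    and hy0: "0 < y" and hy1: "y \<le> 1"
  shows "(1 / y) * psi a (y * exp (1 - y) / (2 * rpow0 (1 - y) (1 - y))) \<le> 1"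
proof (cases "y = 1")
  case True
  have "psi a (1/2) \<le> 1" unfolding psi_def by simp
  thus ?thesis using True by (simp add: rpow0_def)
next
  case False
  hence yl: "y < 1" using hy1 by simp
  define t where "t = 1 - y"
  have t0: "0 < t" using yl t_def by simp
  define c where "c = ln a"
  have cb: "43/100 \<le> c" "c < 1" using c_bound[OF ha hroot] c_def by auto
  define x where "x = y * exp (1 - y) / (2 * rpow0 (1 - y) (1 - y))"
  have rp: "rpow0 (1 - y) (1 - y) = exp (t * ln t)" using t0 by (simp add: rpow0_def powr_def t_def)
  have xe: "x = y / 2 * exp (1 - y - t * ln t)" unfolding x_def rp by (simp add: exp_diff)
  have x0: "0 \<le> x" unfolding xe using hy0 by simp
  have "t * ln t + y - y^2/2 - y^3/6 \<ge> 0" using ln_b2[of y] hy0 yl t_def by simp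
  hence ex: "1 - y - t * ln t \<le> 1 + (- zz y)" unfolding zz_def by simp
  have "exp (1 - y - t * ln t) \<le> exp (1 + (- zz y))" using ex by simp
  also have "\<dots> = exp 1 * exp (- zz y)" by (rule exp_add)
  also have "\<dots> \<le> (2719/1000) * (1 - zz y + (zz y)^2/2)"
    using exp1_ub expneg[OF zz_nonneg[of y]] hy0 by (intro mult_mono) auto
  also have "\<dots> = 2 * WW y" by (simp add: WW_def)
  finally have "exp (1 - y - t * ln t) \<le> 2 * WW y" .
  hence "y / 2 * exp (1 - y - t * ln t) \<le> y / 2 * (2 * WW y)" using hy0 by (intro mult_left_mono) auto
  hence xX: "x \<le> y * WW y" unfolding xe by simp
  define W where "W = WW y"
  have W0: "0 \<le> W" using WW_nonneg W_def by simp
  have G: "57/100 * W + 43/100 * y * W^2 \<le> 1" using G_bound[of y] hy0 hy1 W_def by simp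
  have X1: "y * W \<le> 1"
  proof (rule ccontr)
    assume "\<not> y * W \<le> 1"
    hence h: "y * W > 1" by simp
    have "W \<ge> y * W" using W0 hy1 mult_right_mono[of y 1 W] by simp
    hence W1: "W > 1" using h by simp
    have "43/100 * y * W^2 = 43/100 * W * (y * W)" by (simp add: power2_eq_square)
    also have "\<dots> \<ge> 43/100 * W * 1" using h W0 by (intro mult_left_mono) auto
    finally show False using G W1 by simp
  qed
  have x1: "x \<le> 1" using xX X1 W_def by simp
  have ap: "a powr x = exp (c * x)" using ha by (simp add: powr_def c_def mult.commute)
  have "(1 - x) * (1 + 43/100 * x) \<le> (1 - x) * (1 + c * x)"
    using x1 x0 cb mult_right_mono[of "43/100" c x] by (intro mult_left_mono) auto
  also have "\<dots> \<le> (1 - x) * exp (c * x)" using x1 by (intro mult_left_mono) auto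
  finally have A: "(1 - x) * (1 + 43/100 * x) \<le> (1 - x) * a powr x" using ap by simp
  have "57/100 * x + 43/100 * x^2 \<le> 57/100 * (y*W) + 43/100 * (y*W)^2"
    using xX x0 W_def by (intro add_mono mult_left_mono power_mono) auto
  also have "\<dots> = y * (57/100 * W + 43/100 * y * W^2)" by (simp add: algebra_simps power2_eq_square)
  also have "\<dots> \<le> y * 1" using G hy0 by (intro mult_left_mono) auto
  finally have B: "57/100 * x + 43/100 * x^2 \<le> y" by simp
  have C: "(1 - x) * (1 + 43/100 * x) = 1 - (57/100 * x + 43/100 * x^2)" by (simp add: field_simps power2_eq_square)
  have "psi a x \<le> y" unfolding psi_def using A B C by linarith
  hence "(1 / y) * psi a x \<le> (1/y) * y" using hy0 by (intro mult_left_mono) auto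
  thus ?thesis using hy0 x_def by simp
qed

end
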